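(* Let $d\geq 1$, let $\mathscr{Y}=(\mathbb{P}^5)^d$ be the variety of $d$-tuples of conics in $\mathbb{P}^2$ (over $\mathbb{C}$), and let $h$ be a rational function on $\mathscr{Y}$. Suppose that for every $d$-tuple $(\mathcal{C}_1,\dots,\mathcal{C}_d)$ of conics in $\mathbb{P}^3$ and every two camera projections $\pi,\pi'$ for which both sides are defined, $h(\pi(\mathcal{C}_1),\dots,\pi(\mathcal{C}_d))=h(\pi'(\mathcal{C}_1),\dots,\pi'(\mathcal{C}_d))$. Then $h$ is constant. In other words, there is no nonconstant rational invariant of $d$ conics in $\mathbb{P}^3$ that can be computed from their perspective projection.
   Context: A conic in $\mathbb{P}^2$ is the zero set of a nonzero quadratic form in $3$ variables, up to scalar, so the conics in $\mathbb{P}^2$ are parametrized by $\mathbb{P}^5$. A conic in $\mathbb{P}^3$ is a nondegenerate conic contained in a plane of $\mathbb{P}^3$. A camera projection with center $\bar{o}\in\mathbb{P}^3$ is a map $\pi:\mathbb{P}^3\setminus\{\bar{o}\}\to\mathbb{P}^2$ induced by a rank-$3$ complex $3\times4$ matrix whose kernel is $\bar{o}$; the image $\pi(\mathcal{C})$ of a conic $\mathcal{C}$ whose plane does not contain $\bar{o}$ is a conic in $\mathbb{P}^2$. *)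

theory Defs
  imports "HOL-Analysis.Analysis"
begin

text \<open>Points of (P^5)^d are represented by their affine cones: y :: complex^6^'d,
  block i being the coefficient vector of the i-th plane conic. Index type 'd has d elements.\<close>

text \<open>Polynomial functions in the 6d coordinates y$i$j (over the infinite field C these are
  exactly the polynomials).\<close>
inductive polyfun :: "(complex^6^'d \<Rightarrow> complex) \<Rightarrow> bool" where
  pf_const: "polyfun (\<lambda>y. c)"
| pf_var: "polyfun (\<lambda>y. y $ i $ j)"
| pf_add: "polyfun p \<Longrightarrow> polyfun q \<Longrightarrow> polyfun (\<lambda>y. p y + q y)"
| pf_mult: "polyfun p \<Longrightarrow> polyfun q \<Longrightarrow> polyfun (\<lambda>y. p y * q y)"

definition multihom :: "('d::finite \<Rightarrow> nat) \<Rightarrow> (complex^6^'d \<Rightarrow> complex) \<Rightarrow> bool" where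
  "multihom e p \<longleftrightarrow>
     (\<forall>(l::'d \<Rightarrow> complex) y. p (\<chi> i. l i *s (y $ i)) = (\<Prod>i\<in>UNIV. l i ^ e i) * p y)"

text \<open>Rational function on (P^5)^d: quotient P/Q of multihomogeneous polynomials of the
  same multidegree, Q not identically zero.\<close>
definition rational_fun :: "(complex^6^'d::finite \<Rightarrow> complex) \<Rightarrow> (complex^6^'d \<Rightarrow> complex) \<Rightarrow> bool" where
  "rational_fun P Q \<longleftrightarrow> polyfun P \<and> polyfun Q \<and> (\<exists>e. multihom e P \<and> multihom e Q)
     \<and> (\<exists>y. Q y \<noteq> 0)"

definition conic_eval :: "complex^6 \<Rightarrow> complex^3 \<Rightarrow> complex" where
  "conic_eval c w = c$1 * (w$1)^2 + c$2 * (w$2)^2 + c$3 * (w$3)^2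
      + c$4 * w$1 * w$2 + c$5 * w$1 * w$3 + c$6 * w$2 * w$3"

definition qform :: "complex^3^3 \<Rightarrow> complex^3 \<Rightarrow> complex" where
  "qform A v = (\<Sum>i\<in>UNIV. \<Sum>j\<in>UNIV. v$i * A$i$j * v$j)"

text \<open>A conic in P^3 is given by an injective linear map M : C^3 \<rightarrow> C^4 (embedding a plane)
  and a nondegenerate symmetric 3x3 matrix A; it is the image of the plane conic v^T A v = 0.
  We record it by its affine cone (nonzero vectors of C^4).\<close>
definition space_conic :: "complex^3^4 \<Rightarrow> complex^3^3 \<Rightarrow> bool" where
  "space_conic M A \<longleftrightarrow> inj ((*v) M) \<and> transpose A = A \<and> det A \<noteq> 0"

definition conic_cone :: "complex^3^4 \<Rightarrow> complex^3^3 \<Rightarrow> (complex^4) set" where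
  "conic_cone M A = {M *v v | v. v \<noteq> 0 \<and> qform A v = 0}"

text \<open>Camera: rank 3 complex 3x4 matrix (equivalently surjective).\<close>
definition camera :: "complex^4^3 \<Rightarrow> bool" where
  "camera C \<longleftrightarrow> surj ((*v) C)"

definition center_off_plane :: "complex^4^3 \<Rightarrow> complex^3^4 \<Rightarrow> bool" where
  "center_off_plane C M \<longleftrightarrow> (\<forall>x. x \<noteq> 0 \<and> C *v x = 0 \<longrightarrow> x \<notin> range ((*v) M))"

definition is_image_conic :: "complex^6 \<Rightarrow> complex^4^3 \<Rightarrow> complex^3^4 \<Rightarrow> complex^3^3 \<Rightarrow> bool" where
  "is_image_conic c C M A \<longleftrightarrow>
     {w. w \<noteq> 0 \<and> conic_eval c w = 0} = (\<lambda>x. C *v x) ` conic_cone M A"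

end

theory Submission
  imports Defs "HOL-Computational_Algebra.Polynomial"
begin


definition lin :: "complex^6^'d \<Rightarrow> complex^6^'d \<Rightarrow> complex \<Rightarrow> complex^6^'d" where
  "lin a b t = (\<chi> i j. a$i$j + t * (b$i$j - a$i$j))"

lemma polyfun_line:
  assumes "polyfun f" shows "\<exists>p. \<forall>t. f (lin a b t) = poly p t"
  using assms
proof induction
  case (pf_const c) then show ?case by (intro exI[of _ "[:c:]"]) simp
next
  case (pf_var i j) then show ?case
    by (intro exI[of _ "[:a$i$j, b$i$j - a$i$j:]"]) (simp add: lin_def algebra_simps)
next
  case (pf_add p q)
  then obtain p1 q1 where "\<forall>t. p (lin a b t) = poly p1 t" "\<forall>t. q (lin a b t) = poly q1 t" by blast
  then show ?case by (intro exI[of _ "p1 + q1"]) simp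
next
  case (pf_mult p q)
  then obtain p1 q1 where "\<forall>t. p (lin a b t) = poly p1 t" "\<forall>t. q (lin a b t) = poly q1 t" by blast
  then show ?case by (intro exI[of _ "p1 * q1"]) simp
qed

lemma lin0: "lin a b 0 = a" and lin1: "lin a b 1 = b"
  by (simp_all add: lin_def vec_eq_iff)

lemma polyfun_domain:
  assumes "polyfun f" "polyfun g" "\<And>y. f y * g y = 0" "f a \<noteq> 0"
  shows "g b = 0"
proof -
  obtain pf where pf: "\<forall>t. f (lin a b t) = poly pf t" using polyfun_line[OF assms(1)] by blast
  obtain pg where pg: "\<forall>t. g (lin a b t) = poly pg t" using polyfun_line[OF assms(2)] by blast
  have "\<forall>t. poly (pf * pg) t = 0" using pf pg assms(3) by (metis poly_mult)
  then have "pf * pg = 0" using poly_all_0_iff_0 by blast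
  moreover have "pf \<noteq> 0" using pf assms(4) lin0 by (metis poly_0)
  ultimately have "pg = 0" by simp
  then show ?thesis using pg lin1 by (metis poly_0)
qed

lemma polyfun_domain':
  assumes "polyfun f" "polyfun g" "f a \<noteq> 0" "g b \<noteq> 0"
  shows "\<exists>y. f y * g y \<noteq> 0"
  using polyfun_domain[OF assms(1,2) _ assms(3)] assms(4) by blast

lemma polyfun_comp:
  assumes "polyfun p" "\<And>i j. polyfun (\<lambda>y. T y $ i $ j)"
  shows "polyfun (\<lambda>y. p (T y))"
  using assms(1)
proof induction
  case (pf_const c) then show ?case by (rule polyfun.pf_const)
next
  case (pf_var i j) then show ?case using assms(2) by simp
next
  case (pf_add p q) show ?case using pf_add.IH by (rule polyfun.pf_add)
next
  case (pf_mult p q) show ?case using pf_mult.IH by (rule polyfun.pf_mult)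
qed

lemma polyfun_sum: "finite S \<Longrightarrow> (\<And>k. k \<in> S \<Longrightarrow> polyfun (f k)) \<Longrightarrow> polyfun (\<lambda>y. \<Sum>k\<in>S. f k y)"
  by (induction S rule: finite_induct) (auto intro: polyfun.intros polyfun.pf_const[of 0, simplified])

lemma polyfun_prod: "finite S \<Longrightarrow> (\<And>k. k \<in> S \<Longrightarrow> polyfun (f k)) \<Longrightarrow> polyfun (\<lambda>y. \<Prod>k\<in>S. f k y)"
  by (induction S rule: finite_induct) (auto intro: polyfun.intros polyfun.pf_const[of 1, simplified])

lemma polyfun_diff: "polyfun p \<Longrightarrow> polyfun q \<Longrightarrow> polyfun (\<lambda>y. p y - q y)"
proof -
  assume "polyfun p" "polyfun q"
  then have "polyfun (\<lambda>y. p y + (-1) * q y)" by (intro polyfun.intros)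
  then show ?thesis by simp
qed

lemma polyfun_if: "polyfun p \<Longrightarrow> polyfun q \<Longrightarrow> polyfun (\<lambda>y. if b then p y else q y)"
  by (cases b) auto



lemma vector_6:
 "(vector [x1,x2,x3,x4,x5,x6] ::('a::zero)^6)$1 = x1"
 "(vector [x1,x2,x3,x4,x5,x6] ::('a::zero)^6)$2 = x2"
 "(vector [x1,x2,x3,x4,x5,x6] ::('a::zero)^6)$3 = x3"
 "(vector [x1,x2,x3,x4,x5,x6] ::('a::zero)^6)$4 = x4"
 "(vector [x1,x2,x3,x4,x5,x6] ::('a::zero)^6)$5 = x5"
 "(vector [x1,x2,x3,x4,x5,x6] ::('a::zero)^6)$6 = x6"
  unfolding vector_def by simp_all

lemma ex6: "(j::6) = 1 \<or> j = 2 \<or> j = 3 \<or> j = 4 \<or> j = 5 \<or> j = 6"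
proof -
  have "{1,2,3,4,5,6::6} = UNIV"
    by (rule card_subset_eq) auto
  then show ?thesis by auto
qed

lemma vec6_eq: "(c::'a^6) = d \<longleftrightarrow> c$1 = d$1 \<and> c$2 = d$2 \<and> c$3 = d$3 \<and> c$4 = d$4 \<and> c$5 = d$5 \<and> c$6 = d$6"
proof
  assume "c$1 = d$1 \<and> c$2 = d$2 \<and> c$3 = d$3 \<and> c$4 = d$4 \<and> c$5 = d$5 \<and> c$6 = d$6"
  note asm = this
  { fix j :: 6 have "c$j = d$j" using ex6[of j] asm by auto }
  then show "c = d" by (simp add: vec_eq_iff)
qed simp

definition symA :: "complex^6 \<Rightarrow> complex^3^3" where
  "symA c = vector [vector [c$1, c$4/2, c$5/2], vector [c$4/2, c$2, c$6/2], vector [c$5/2, c$6/2, c$3]]"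

definition cvec :: "complex^3^3 \<Rightarrow> complex^6" where
  "cvec B = vector [B$1$1, B$2$2, B$3$3, 2*B$1$2, 2*B$1$3, 2*B$2$3]"

definition Delta :: "complex^6 \<Rightarrow> complex" where
  "Delta c = 4*c$1*c$2*c$3 + c$4*c$5*c$6 - c$1*(c$6)^2 - c$2*(c$5)^2 - c$3*(c$4)^2"

lemma det_symA: "det (symA c) = Delta c / 4"
  by (simp add: det_3 symA_def Delta_def field_simps power2_eq_square)

lemma qform_symA: "qform (symA c) v = conic_eval c v"
  by (simp add: qform_def sum_3 symA_def conic_eval_def field_simps power2_eq_square)

lemma symA_sym: "transpose (symA c) = symA c"
  by (simp add: vec_eq_iff forall_3 transpose_def symA_def)

lemma symA_cvec: assumes "transpose B = B" shows "symA (cvec B) = B"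
proof -
  have "B$j$i = B$i$j" for i j
  proof -
    have "transpose B $ i $ j = B$i$j" using assms by simp
    then show ?thesis by (simp add: transpose_def)
  qed
  then show ?thesis by (simp add: vec_eq_iff forall_3 symA_def cvec_def vector_6)
qed

definition dotc :: "complex^3 \<Rightarrow> complex^3 \<Rightarrow> complex" where
  "dotc x y = (\<Sum>i\<in>UNIV. x$i * y$i)"

lemma qform_dotc: "qform A v = dotc v (A *v v)"
  by (simp add: qform_def dotc_def matrix_vector_mult_def sum_distrib_left mult.assoc)

lemma dotc_mv: "dotc (S *v v) w = dotc v (transpose S *v w)"
proof -
  have "dotc (S *v v) w = (\<Sum>i\<in>UNIV. \<Sum>k\<in>UNIV. S$i$k * v$k * w$i)"
    by (simp add: dotc_def matrix_vector_mult_def sum_distrib_right)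
  also have "\<dots> = (\<Sum>k\<in>UNIV. \<Sum>i\<in>UNIV. S$i$k * v$k * w$i)"
    by (rule sum.swap)
  also have "\<dots> = dotc v (transpose S *v w)"
    by (simp add: dotc_def matrix_vector_mult_def transpose_def sum_distrib_left mult_ac)
  finally show ?thesis .
qed

lemma qform_mv: "qform A (S *v v) = qform (transpose S ** A ** S) v"
  by (simp add: qform_dotc dotc_mv matrix_vector_mul_assoc matrix_mul_assoc)

definition sub :: "complex^3^3 \<Rightarrow> complex^6 \<Rightarrow> complex^6" where
  "sub S c = cvec (transpose S ** symA c ** S)"

lemma sym_tAS: "transpose (transpose S ** symA c ** S) = transpose S ** symA c ** S"
  by (simp add: matrix_transpose_mul symA_sym matrix_mul_assoc)

lemma cvec_eval: "transpose B = B \<Longrightarrow> conic_eval (cvec B) w = qform B w"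
  by (metis qform_symA symA_cvec)

lemma sub_eval: "conic_eval (sub S c) w = conic_eval c (S *v w)"
  unfolding sub_def cvec_eval[OF sym_tAS] qform_mv[symmetric] qform_symA ..

lemma symA_sub: "symA (sub S c) = transpose S ** symA c ** S"
  by (simp add: sub_def symA_cvec sym_tAS)

lemma Delta_sub: "Delta (sub S c) = (det S)^2 * Delta c"
proof -
  have "Delta (sub S c) = 4 * det (symA (sub S c))" by (simp add: det_symA)
  also have "\<dots> = 4 * (det S * det (symA c) * det S)" by (simp add: symA_sub det_mul)
  finally show ?thesis by (simp add: det_symA power2_eq_square)
qed



definition bv1 :: "complex^3" where "bv1 = vector [1,0,0]"
definition bv2 :: "complex^3" where "bv2 = vector [0,1,0]"
definition bv3 :: "complex^3" where "bv3 = vector [0,0,1]"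

lemma cases3: obtains "k = (1::3)" | "k = 2" | "k = 3" using exhaust_3 by blast

lemma ceval_coeffs:
  "c = vector [conic_eval c bv1, conic_eval c bv2, conic_eval c bv3,
     conic_eval c (bv1+bv2) - conic_eval c bv1 - conic_eval c bv2,
     conic_eval c (bv1+bv3) - conic_eval c bv1 - conic_eval c bv3,
     conic_eval c (bv2+bv3) - conic_eval c bv2 - conic_eval c bv3]"
  by (simp add: vec6_eq vector_6 conic_eval_def bv1_def bv2_def bv3_def algebra_simps power2_eq_square)

lemma ceval_inj: "(\<And>w. conic_eval c w = conic_eval d w) \<Longrightarrow> c = d"
  by (metis ceval_coeffs)

lemma sub_coeffs:
  "sub S c = (let q = (\<lambda>v. conic_eval c (S *v v)) in
     vector [q bv1, q bv2, q bv3, q (bv1+bv2) - q bv1 - q bv2, q (bv1+bv3) - q bv1 - q bv3, q (bv2+bv3) - q bv2 - q bv3])"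
  by (subst ceval_coeffs) (simp add: sub_eval Let_def)

lemma sub_sub: "sub S' (sub S c) = sub (S ** S') c"
  by (rule ceval_inj) (simp add: sub_eval matrix_vector_mul_assoc)

lemma sub_id: "sub (mat 1) c = c"
  by (rule ceval_inj) (simp add: sub_eval)

definition outer :: "complex^3 \<Rightarrow> complex^3 \<Rightarrow> complex^3^3" where
  "outer f n = (\<chi> i j. f$i * n$j)"

definition Mmat :: "complex^3 \<Rightarrow> complex^3^4" where
  "Mmat n = (\<chi> r c. if r = 4 then n$c else if (r = 1 \<and> c = 1) \<or> (r = 2 \<and> c = 2) \<or> (r = 3 \<and> c = 3) then 1 else 0)"

definition Cmat :: "complex^3 \<Rightarrow> complex^4^3" where
  "Cmat f = (\<chi> k r. if r = 4 then f$k else if (k = 1 \<and> r = 1) \<or> (k = 2 \<and> r = 2) \<or> (k = 3 \<and> r = 3) then 1 else 0)"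

lemma CM: "Cmat f ** Mmat n = mat 1 + outer f n"
  by (simp add: vec_eq_iff forall_3 matrix_matrix_mult_def sum_4 Cmat_def Mmat_def mat_def outer_def)

lemma outer0: "outer f 0 = 0" "outer 0 n = 0"
  by (simp_all add: outer_def vec_eq_iff)

lemma camera_Cmat: "camera (Cmat f)"
  unfolding camera_def
proof (rule surjI)
  fix y show "Cmat f *v (Mmat 0 *v y) = y"
    by (simp add: matrix_vector_mul_assoc CM outer0)
qed

lemma inj_Mmat: "inj ((*v) (Mmat n))"
proof (rule injI)
  fix x y assume "Mmat n *v x = Mmat n *v y"
  then have "Cmat 0 *v (Mmat n *v x) = Cmat 0 *v (Mmat n *v y)" by simp
  then show "x = y" by (simp add: matrix_vector_mul_assoc CM outer0)
qed

lemma cop: assumes "N ** S = mat 1" "C ** M = N" shows "center_off_plane C M"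
  unfolding center_off_plane_def
proof (intro allI impI)
  fix x assume x: "x \<noteq> 0 \<and> C *v x = 0"
  show "x \<notin> range ((*v) M)"
  proof
    assume "x \<in> range ((*v) M)"
    then obtain v where v: "x = M *v v" by blast
    then have "N *v v = 0" using x assms(2) by (simp add: matrix_vector_mul_assoc)
    then have "S *v (N *v v) = 0" by simp
    moreover have "S ** N = mat 1" using assms(1) matrix_left_right_inverse by blast
    ultimately have "v = 0" by (simp add: matrix_vector_mul_assoc)
    then show False using v x by simp
  qed
qed

lemma image_lemma:
  assumes "N ** S = mat 1" "C ** M = N" "\<And>w. conic_eval c' w = conic_eval c (S *v w)"
  shows "is_image_conic c' C M (symA c)"
proof -
  have SN: "S ** N = mat 1" using assms(1) matrix_left_right_inverse by blast
  have "{w. w \<noteq> 0 \<and> conic_eval c' w = 0} = (\<lambda>x. C *v x) ` conic_cone M (symA c)"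
  proof
    show "{w. w \<noteq> 0 \<and> conic_eval c' w = 0} \<subseteq> (\<lambda>x. C *v x) ` conic_cone M (symA c)"
    proof
      fix w assume w: "w \<in> {w. w \<noteq> 0 \<and> conic_eval c' w = 0}"
      have w': "w = C *v (M *v (S *v w))"
        using assms(1,2) by (simp add: matrix_vector_mul_assoc matrix_mul_assoc)
      have "S *v w \<noteq> 0" using w w' by auto
      moreover have "qform (symA c) (S *v w) = 0" using w assms(3) by (simp add: qform_symA)
      ultimately have "M *v (S *v w) \<in> conic_cone M (symA c)" unfolding conic_cone_def by blast
      then show "w \<in> (\<lambda>x. C *v x) ` conic_cone M (symA c)" using w' by blast
    qed
  next
    show "(\<lambda>x. C *v x) ` conic_cone M (symA c) \<subseteq> {w. w \<noteq> 0 \<and> conic_eval c' w = 0}"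
    proof
      fix w assume "w \<in> (\<lambda>x. C *v x) ` conic_cone M (symA c)"
      then obtain v where v: "v \<noteq> 0" "qform (symA c) v = 0" "w = C *v (M *v v)"
        unfolding conic_cone_def by blast
      then have wN: "w = N *v v" using assms(2) by (simp add: matrix_vector_mul_assoc)
      have "S *v w = v" using wN SN by (simp add: matrix_vector_mul_assoc)
      then have "w \<noteq> 0" using v by auto
      moreover have "conic_eval c' w = 0" using assms(3) \<open>S *v w = v\<close> v by (simp add: qform_symA)
      ultimately show "w \<in> {w. w \<noteq> 0 \<and> conic_eval c' w = 0}" by simp
    qed
  qed
  then show ?thesis unfolding is_image_conic_def .
qed

lemma space_conic_lemma: "Delta c \<noteq> 0 \<Longrightarrow> space_conic (Mmat n) (symA c)"
  unfolding space_conic_def using inj_Mmat symA_sym by (simp add: det_symA)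

definition E :: "3 \<Rightarrow> 3 \<Rightarrow> complex \<Rightarrow> complex^3^3" where
  "E k j a = (\<chi> r s. (if r = s then 1 else 0) + (if r = k \<and> s = j then a else 0))"

lemma E_outer: "E k j a = mat 1 + outer (a *s axis k 1) (axis j 1)"
  by (simp add: vec_eq_iff E_def mat_def outer_def axis_def)

lemma E_mv: "E k j a *v v = v + (a * v$j) *s axis k 1"
  by (cases k rule: cases3; cases j rule: cases3)
     (simp_all add: vec_eq_iff forall_3 E_def matrix_vector_mult_def sum_3 axis_def distrib_right)

lemma E_mult: "a + b + (if k = j then a*b else 0) = 0 \<Longrightarrow> E k j a ** E k j b = mat 1"
  by (cases k rule: cases3; cases j rule: cases3)
     (simp_all add: vec_eq_iff forall_3 E_def matrix_matrix_mult_def sum_3 mat_def algebra_simps)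

lemma det_E: "det (E k j a) = (if k = j then 1 + a else 1)"
  by (cases k rule: cases3; cases j rule: cases3) (simp_all add: det_3 E_def)



lemma c6v: "(c::complex^6) = vector [c$1, c$2, c$3, c$4, c$5, c$6]"
  by (simp add: vec6_eq vector_6)

lemmas sEsimps = Let_def E_mv bv1_def bv2_def bv3_def conic_eval_def axis_def vec6_eq vector_6 power2_eq_square algebra_simps

lemma sE11: "sub (E 1 1 t) c = vector [(1+t)^2*c$1, c$2, c$3, (1+t)*c$4, (1+t)*c$5, c$6]" by (subst sub_coeffs) (simp add: sEsimps)
lemma sE22: "sub (E 2 2 t) c = vector [c$1, (1+t)^2*c$2, c$3, (1+t)*c$4, c$5, (1+t)*c$6]" by (subst sub_coeffs) (simp add: sEsimps)
lemma sE33: "sub (E 3 3 t) c = vector [c$1, c$2, (1+t)^2*c$3, c$4, (1+t)*c$5, (1+t)*c$6]" by (subst sub_coeffs) (simp add: sEsimps)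
lemma sE21: "sub (E 2 1 t) c = vector [c$1 + t^2*c$2 + t*c$4, c$2, c$3, 2*t*c$2 + c$4, c$5 + t*c$6, c$6]" by (subst sub_coeffs) (simp add: sEsimps)
lemma sE31: "sub (E 3 1 t) c = vector [c$1 + t^2*c$3 + t*c$5, c$2, c$3, c$4 + t*c$6, 2*t*c$3 + c$5, c$6]" by (subst sub_coeffs) (simp add: sEsimps)
lemma sE12: "sub (E 1 2 t) c = vector [c$1, c$2 + t^2*c$1 + t*c$4, c$3, 2*t*c$1 + c$4, c$5, c$6 + t*c$5]" by (subst sub_coeffs) (simp add: sEsimps)
lemma sE13: "sub (E 1 3 t) c = vector [c$1, c$2, c$3 + t^2*c$1 + t*c$5, c$4, c$5 + 2*t*c$1, c$6 + t*c$4]" by (subst sub_coeffs) (simp add: sEsimps)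
lemma sE32: "sub (E 3 2 t) c = vector [c$1, c$2 + t^2*c$3 + t*c$6, c$3, c$4 + t*c$5, c$5, c$6 + 2*t*c$3]" by (subst sub_coeffs) (simp add: sEsimps)
lemma sE23: "sub (E 2 3 t) c = vector [c$1, c$2, c$3 + t^2*c$2 + t*c$6, c$4, c$5 + t*c$4, c$6 + 2*t*c$2]" by (subst sub_coeffs) (simp add: sEsimps)

definition bstep :: "complex^6 \<Rightarrow> complex^6 \<Rightarrow> bool" where
  "bstep c c' \<longleftrightarrow> (\<exists>k j t. (k \<noteq> j \<or> t \<noteq> -1) \<and> c' = sub (E k j t) c)"

definition std :: "complex^6" where "std = vector [1,1,1,0,0,0]"

lemma Delta_E: "Delta (sub (E k j t) c) = (if k = j then (1+t)^2 else 1) * Delta c"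
  by (simp add: Delta_sub det_E)

lemma bstepI: "k \<noteq> j \<or> t \<noteq> -1 \<Longrightarrow> bstep\<^sup>*\<^sup>* (sub (E k j t) c) d \<Longrightarrow> bstep\<^sup>*\<^sup>* c d"
  by (rule converse_rtranclp_into_rtranclp[of bstep c "sub (E k j t) c"]) (auto simp: bstep_def)

lemma pick12: "(y::complex) \<noteq> 0 \<Longrightarrow> \<exists>t\<in>{1,2}. t^2*x + t*y \<noteq> 0"
proof (rule ccontr)
  assume "y \<noteq> 0" "\<not> (\<exists>t\<in>{1,2}. t^2*x + t*y \<noteq> 0)"
  then have h: "x + y = 0" "4*x + 2*y = 0" by (auto simp: power2_eq_square)
  have "-2*y = (4*x+2*y) - 4*(x+y)" by (simp add: algebra_simps)
  then show False using h \<open>y \<noteq> 0\<close> by simp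
qed

lemma sqrt_norm: "(x::complex) \<noteq> 0 \<Longrightarrow> (1 + (1/csqrt x - 1))^2 * x = 1"
  by (simp add: power_divide power2_csqrt)

lemma N5: assumes "c$4 = 0" "c$5 = 0" "c$6 = 0" "c$1 \<noteq> 0" "c$2 \<noteq> 0" "c$3 \<noteq> 0"
  shows "bstep\<^sup>*\<^sup>* c std"
proof -
  define t1 where "t1 = 1/csqrt (c$1) - 1"
  define t2 where "t2 = 1/csqrt (c$2) - 1"
  define t3 where "t3 = 1/csqrt (c$3) - 1"
  have ne: "t1 \<noteq> -1" "t2 \<noteq> -1" "t3 \<noteq> -1" using assms by (auto simp: t1_def t2_def t3_def)
  have "sub (E 3 3 t3) (sub (E 2 2 t2) (sub (E 1 1 t1) c)) = std"
    using assms sqrt_norm[of "c$1"] sqrt_norm[of "c$2"] sqrt_norm[of "c$3"]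
    by (simp add: sE11 sE22 sE33 vector_6 std_def vec6_eq t1_def t2_def t3_def)
  then show ?thesis using ne
    by (metis bstepI rtranclp.rtrancl_refl)
qed

lemma N4: assumes "c$4 = 0" "c$5 = 0" "c$1 \<noteq> 0" "c$2 \<noteq> 0" "Delta c \<noteq> 0"
  shows "bstep\<^sup>*\<^sup>* c std"
proof -
  define t where "t = - c$6 / (2 * c$2)"
  define c' where "c' = sub (E 2 3 t) c"
  have D: "Delta c' \<noteq> 0" using assms by (simp add: c'_def Delta_E)
  have c': "c'$1 = c$1" "c'$2 = c$2" "c'$4 = 0" "c'$5 = 0" "c'$6 = 0"
    using assms by (simp_all add: c'_def sE23 vector_6 t_def)
  then have "c'$3 \<noteq> 0" using D assms by (auto simp: Delta_def)
  then have "bstep\<^sup>*\<^sup>* c' std" using c' assms by (intro N5) auto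
  then show ?thesis unfolding c'_def by (rule bstepI[rotated]) simp
qed

lemma N3: assumes "c$4 = 0" "c$5 = 0" "c$1 \<noteq> 0" "Delta c \<noteq> 0"
  shows "bstep\<^sup>*\<^sup>* c std"
proof (cases "c$2 = 0")
  case False then show ?thesis using assms N4 by blast
next
  case True
  then have "c$6 \<noteq> 0" using assms by (auto simp: Delta_def)
  then obtain t where t: "t\<in>{1,2}" "t^2*c$3 + t*c$6 \<noteq> 0" using pick12 by blast
  define c' where "c' = sub (E 3 2 t) c"
  have D: "Delta c' \<noteq> 0" using assms by (simp add: c'_def Delta_E)
  have c': "c'$1 = c$1" "c'$2 \<noteq> 0" "c'$4 = 0" "c'$5 = 0"
    using assms True t by (simp_all add: c'_def sE32 vector_6)
  then have "bstep\<^sup>*\<^sup>* c' std" using D assms by (intro N4) auto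
  then show ?thesis unfolding c'_def by (rule bstepI[rotated]) simp
qed

lemma N2: assumes "c$1 \<noteq> 0" "Delta c \<noteq> 0"
  shows "bstep\<^sup>*\<^sup>* c std"
proof -
  define t where "t = - c$4 / (2 * c$1)"
  define c' where "c' = sub (E 1 2 t) c"
  define t' where "t' = - c'$5 / (2 * c'$1)"
  define c'' where "c'' = sub (E 1 3 t') c'"
  have D: "Delta c'' \<noteq> 0" using assms by (simp add: c'_def c''_def Delta_E)
  have c': "c'$1 = c$1" "c'$4 = 0"
    using assms by (simp_all add: c'_def sE12 vector_6 t_def)
  have c'': "c''$1 = c$1" "c''$4 = 0" "c''$5 = 0"
    using assms c' by (simp_all add: c''_def sE13 vector_6 t'_def)
  have "bstep\<^sup>*\<^sup>* c'' std" using D assms c'' by (intro N3) auto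
  then have "bstep\<^sup>*\<^sup>* c' std" unfolding c''_def by (rule bstepI[rotated]) simp
  then show ?thesis unfolding c'_def by (rule bstepI[rotated]) simp
qed

lemma N1: assumes "Delta c \<noteq> 0" shows "bstep\<^sup>*\<^sup>* c std"
proof (cases "c$1 = 0")
  case False then show ?thesis using assms N2 by blast
next
  case True
  show ?thesis
  proof (cases "c$4 = 0")
    case False
    then obtain t where t: "t\<in>{1,2}" "t^2*c$2 + t*c$4 \<noteq> 0" using pick12 by blast
    define c' where "c' = sub (E 2 1 t) c"
    have D: "Delta c' \<noteq> 0" using assms by (simp add: c'_def Delta_E)
    have "c'$1 \<noteq> 0" using True t by (simp add: c'_def sE21 vector_6)
    then have "bstep\<^sup>*\<^sup>* c' std" using D by (intro N2) auto
    then show ?thesis unfolding c'_def by (rule bstepI[rotated]) simp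
  next
    case c4: True
    then have "c$5 \<noteq> 0" using assms True by (auto simp: Delta_def)
    then obtain t where t: "t\<in>{1,2}" "t^2*c$3 + t*c$5 \<noteq> 0" using pick12 by blast
    define c' where "c' = sub (E 3 1 t) c"
    have D: "Delta c' \<noteq> 0" using assms by (simp add: c'_def Delta_E)
    have "c'$1 \<noteq> 0" using True t by (simp add: c'_def sE31 vector_6)
    then have "bstep\<^sup>*\<^sup>* c' std" using D by (intro N2) auto
    then show ?thesis unfolding c'_def by (rule bstepI[rotated]) simp
  qed
qed



definition INV :: "(complex^6^'d::finite \<Rightarrow> complex) \<Rightarrow> (complex^6^'d \<Rightarrow> complex) \<Rightarrow> bool" where
  "INV P Q \<longleftrightarrow> (\<forall>(M :: 'd \<Rightarrow> complex^3^4) (A :: 'd \<Rightarrow> complex^3^3) C C' (c :: complex^6^'d) c'.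
       (\<forall>i. space_conic (M i) (A i)) \<longrightarrow> camera C \<longrightarrow> camera C' \<longrightarrow>
       (\<forall>i. center_off_plane C (M i) \<and> center_off_plane C' (M i)) \<longrightarrow>
       (\<forall>i. is_image_conic (c $ i) C (M i) (A i) \<and> is_image_conic (c' $ i) C' (M i) (A i)) \<longrightarrow>
       Q c \<noteq> 0 \<longrightarrow> Q c' \<noteq> 0 \<longrightarrow> P c / Q c = P c' / Q c')"

definition gmap :: "'d::finite \<Rightarrow> complex^3^3 \<Rightarrow> complex^6^'d \<Rightarrow> complex^6^'d" where
  "gmap i0 S y = (\<chi> i. if i = i0 then sub S (y$i) else y$i)"

definition inv_par :: "3 \<Rightarrow> 3 \<Rightarrow> complex \<Rightarrow> complex" where
  "inv_par k j t = (if k = j then - t / (1 + t) else - t)"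

lemma inv_par_ok: "k \<noteq> j \<or> t \<noteq> -1 \<Longrightarrow> t + inv_par k j t + (if k = j then t * inv_par k j t else 0) = 0"
proof (cases "k = j")
  case True
  assume "k \<noteq> j \<or> t \<noteq> -1"
  then have "1 + t \<noteq> 0" using True by (metis add.commute add_eq_0_iff)
  then show ?thesis using True by (simp add: inv_par_def field_simps)
qed (simp add: inv_par_def)

lemma inv_par_cond: "k \<noteq> j \<or> t \<noteq> -1 \<Longrightarrow> k \<noteq> j \<or> inv_par k j t \<noteq> -1"
proof (cases "k = j")
  case True
  assume a: "k \<noteq> j \<or> t \<noteq> -1"
  then have "1 + t \<noteq> 0" using True by (metis add.commute add_eq_0_iff)
  then show ?thesis using True by (simp add: inv_par_def field_simps)
qed simp

lemma E_inv1: "k \<noteq> j \<or> t \<noteq> -1 \<Longrightarrow> E k j t ** E k j (inv_par k j t) = mat 1"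
  by (rule E_mult) (use inv_par_ok in auto)

lemma E_inv2: "k \<noteq> j \<or> t \<noteq> -1 \<Longrightarrow> E k j (inv_par k j t) ** E k j t = mat 1"
  by (rule E_mult) (use inv_par_ok[of k j t] in \<open>auto simp: algebra_simps\<close>)

lemma gmap_gmap: "gmap i0 S' (gmap i0 S y) = gmap i0 (S ** S') y"
  by (simp add: gmap_def vec_eq_iff sub_sub)

lemma gmap_id: "gmap i0 (mat 1) y = y"
  by (simp add: gmap_def vec_eq_iff sub_id)

definition gstep :: "complex^6^'d::finite \<Rightarrow> complex^6^'d \<Rightarrow> bool" where
  "gstep y z \<longleftrightarrow> (\<exists>i0 k j t. (k \<noteq> j \<or> t \<noteq> -1) \<and> z = gmap i0 (E k j t) y)"

lemma gstep_sym: "gstep y z \<Longrightarrow> gstep z y"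
proof -
  assume "gstep y z"
  then obtain i0 k j t where c: "k \<noteq> j \<or> t \<noteq> -1" and z: "z = gmap i0 (E k j t) y"
    unfolding gstep_def by blast
  have "gmap i0 (E k j (inv_par k j t)) z = y"
    using c by (simp add: z gmap_gmap E_inv1 gmap_id)
  then show ?thesis unfolding gstep_def using inv_par_cond[OF c] by metis
qed

lemma gstep_rtr_sym: "gstep\<^sup>*\<^sup>* y z \<Longrightarrow> gstep\<^sup>*\<^sup>* z y"
proof (induction rule: rtranclp_induct)
  case base then show ?case by simp
next
  case (step z w)
  then show ?case using gstep_sym by (metis converse_rtranclp_into_rtranclp)
qed

lemma pf_ceval: "polyfun (\<lambda>y::complex^6^'d. conic_eval (y$i) v)"
  unfolding conic_eval_def
  by (intro polyfun.pf_add polyfun.pf_mult polyfun.pf_var polyfun.pf_const)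

lemma pf_Delta: "polyfun (\<lambda>y::complex^6^'d. Delta (y$i))"
  unfolding Delta_def power2_eq_square
  by (intro polyfun_diff polyfun.pf_add polyfun.pf_mult polyfun.pf_var polyfun.pf_const)

lemma pf_sub: "polyfun (\<lambda>y::complex^6^'d. sub S (y$i) $ j)"
  using ex6[of j]
  by (elim disjE) (simp_all add: sub_coeffs Let_def vector_6 polyfun_diff pf_ceval)

lemma pf_gmap: "polyfun (\<lambda>y::complex^6^'d::finite. gmap i0 S y $ i $ j)"
  by (cases "i = i0") (simp_all add: gmap_def pf_sub polyfun.pf_var)

definition DD :: "complex^6^'d::finite \<Rightarrow> complex" where
  "DD y = (\<Prod>i\<in>UNIV. Delta (y$i))"

lemma pf_DD: "polyfun (DD :: complex^6^'d::finite \<Rightarrow> complex)"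
proof -
  have "polyfun (\<lambda>y::complex^6^'d. \<Prod>i\<in>UNIV. Delta (y$i))"
    by (rule polyfun_prod) (simp_all add: pf_Delta)
  then show ?thesis unfolding DD_def[abs_def] .
qed

lemma DD_nz: "DD y \<noteq> 0 \<longleftrightarrow> (\<forall>i. Delta (y$i) \<noteq> 0)"
  by (simp add: DD_def)

definition stdall :: "complex^6^'d::finite" where "stdall = (\<chi> i. std)"

lemma DD_std: "DD (stdall :: complex^6^'d::finite) \<noteq> 0"
  by (simp add: DD_nz stdall_def Delta_def std_def vector_6)

lemma hyp_gen:
  fixes P Q :: "complex^6^'d::finite \<Rightarrow> complex"
  assumes inv: "INV P Q" and cond: "k \<noteq> j \<or> t \<noteq> -1"
    and Qy: "Q y \<noteq> 0" and Qz: "Q (gmap i0 (E k j t) y) \<noteq> 0" and D: "\<forall>i. Delta (y$i) \<noteq> 0"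
  shows "P y / Q y = P (gmap i0 (E k j t) y) / Q (gmap i0 (E k j t) y)"
proof -
  define S where "S = E k j t"
  define N where "N = E k j (inv_par k j t)"
  have NS: "N ** S = mat 1" using E_inv2[OF cond] by (simp add: N_def S_def)
  define M where "M = (\<lambda>i. Mmat (if i = i0 then axis j 1 else 0))"
  define C :: "complex^4^3" where "C = Cmat 0"
  define C' :: "complex^4^3" where "C' = Cmat (inv_par k j t *s axis k 1)"
  define A where "A = (\<lambda>i. symA (y$i))"
  define z where "z = gmap i0 (E k j t) y"
  have CMl: "C ** M i = mat 1" for i by (simp add: C_def M_def CM outer0)
  have CMl': "C' ** M i = (if i = i0 then N else mat 1)" for i
    by (simp add: C'_def M_def CM outer0 N_def E_outer)
  have sc: "\<forall>i. space_conic (M i) (A i)" using D by (simp add: M_def A_def space_conic_lemma)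
  have cam: "camera C" "camera C'" by (simp_all add: C_def C'_def camera_Cmat)
  have co: "\<forall>i. center_off_plane C (M i) \<and> center_off_plane C' (M i)"
  proof
    fix i
    show "center_off_plane C (M i) \<and> center_off_plane C' (M i)"
      using cop[of "mat 1" "mat 1" C "M i"] cop[OF NS, of C' "M i"] cop[of "mat 1" "mat 1" C' "M i"]
        CMl[of i] CMl'[of i] by (auto split: if_splits)
  qed
  have im: "\<forall>i. is_image_conic (y $ i) C (M i) (A i) \<and> is_image_conic (z $ i) C' (M i) (A i)"
  proof
    fix i
    have 1: "is_image_conic (y $ i) C (M i) (A i)"
      unfolding A_def by (rule image_lemma[of "mat 1" "mat 1"]) (simp_all add: CMl)
    have 2: "is_image_conic (z $ i) C' (M i) (A i)"
    proof (cases "i = i0")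
      case True
      show ?thesis unfolding A_def
        by (rule image_lemma[OF NS]) (simp_all add: CMl' True z_def gmap_def S_def sub_eval)
    next
      case False
      show ?thesis unfolding A_def
        by (rule image_lemma[of "mat 1" "mat 1"]) (simp_all add: CMl' False z_def gmap_def)
    qed
    show "is_image_conic (y $ i) C (M i) (A i) \<and> is_image_conic (z $ i) C' (M i) (A i)"
      using 1 2 by blast
  qed
  have "P y / Q y = P z / Q z"
    by (rule inv[unfolded INV_def, rule_format, of M A C C' y z])
       (use sc cam co im Qy Qz in \<open>auto simp: z_def\<close>)
  then show ?thesis by (simp add: z_def)
qed



definition good :: "(complex^6^'d::finite \<Rightarrow> complex) \<Rightarrow> (complex^6^'d \<Rightarrow> complex) \<Rightarrow> (complex^6^'d \<Rightarrow> complex^6^'d) \<Rightarrow> bool" where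
  "good P Q T \<longleftrightarrow> (\<forall>i j. polyfun (\<lambda>y. T y $ i $ j)) \<and> surj T \<and> (\<forall>y. P y * Q (T y) = P (T y) * Q y)"

lemma good_id: "good P Q (\<lambda>x. x)"
  by (simp add: good_def polyfun.pf_var)

lemma good_comp:
  assumes PQ: "polyfun P" "polyfun Q" and Qa: "Q a \<noteq> 0"
    and g1: "good P Q T1" and g2: "good P Q T2"
  shows "good P Q (T2 \<circ> T1)"
proof -
  have pf1: "\<And>i j. polyfun (\<lambda>y. T1 y $ i $ j)" and s1: "surj T1" and h1: "\<And>y. P y * Q (T1 y) = P (T1 y) * Q y"
    using g1 by (auto simp: good_def)
  have pf2: "\<And>i j. polyfun (\<lambda>y. T2 y $ i $ j)" and s2: "surj T2" and h2: "\<And>y. P y * Q (T2 y) = P (T2 y) * Q y"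
    using g2 by (auto simp: good_def)
  have pfc: "polyfun (\<lambda>y. (T2 \<circ> T1) y $ i $ j)" for i j
    using polyfun_comp[OF pf2 pf1] by simp
  have sc: "surj (T2 \<circ> T1)" using s1 s2 by (rule comp_surj)
  have pQ1: "polyfun (\<lambda>y. Q (T1 y))" by (rule polyfun_comp[OF PQ(2) pf1])
  have pB: "polyfun (\<lambda>y. P y * Q ((T2 \<circ> T1) y) - P ((T2 \<circ> T1) y) * Q y)"
    by (intro polyfun_diff polyfun.pf_mult PQ polyfun_comp[OF _ pfc])
  have zero: "Q (T1 y) * (P y * Q ((T2 \<circ> T1) y) - P ((T2 \<circ> T1) y) * Q y) = 0" for y
  proof -
    have "Q (T1 y) * (P y * Q ((T2 \<circ> T1) y) - P ((T2 \<circ> T1) y) * Q y)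
      = Q (T2 (T1 y)) * (P y * Q (T1 y)) - Q y * (P (T1 y) * Q (T2 (T1 y)))
        + Q y * (P (T1 y) * Q (T2 (T1 y)) - P (T2 (T1 y)) * Q (T1 y))"
      by (simp add: algebra_simps)
    also have "\<dots> = 0" by (simp add: h1 h2 algebra_simps)
    finally show ?thesis .
  qed
  obtain b where b: "T1 b = a" using s1 by (metis surj_def)
  have "P y * Q ((T2 \<circ> T1) y) - P ((T2 \<circ> T1) y) * Q y = 0" for y
    by (rule polyfun_domain[OF pQ1 pB zero, of b]) (simp add: b Qa)
  then show ?thesis using pfc sc by (simp add: good_def)
qed

lemma good_gen:
  fixes P Q :: "complex^6^'d::finite \<Rightarrow> complex"
  assumes PQ: "polyfun P" "polyfun Q" and Qa: "Q a \<noteq> 0" and inv: "INV P Q"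
    and cond: "k \<noteq> j \<or> t \<noteq> -1"
  shows "good P Q (gmap i0 (E k j t))"
proof -
  let ?T = "gmap i0 (E k j t)"
  let ?T' = "gmap i0 (E k j (inv_par k j t))"
  have pf: "polyfun (\<lambda>y. ?T y $ i $ j)" for i j by (rule pf_gmap)
  have inv1: "?T (?T' y) = y" for y using E_inv2[OF cond] by (simp add: gmap_gmap gmap_id)
  then have s: "surj ?T" by (metis surjI)
  have pQT: "polyfun (\<lambda>y. Q (?T y))" by (rule polyfun_comp[OF PQ(2) pf_gmap])
  have pPT: "polyfun (\<lambda>y. P (?T y))" by (rule polyfun_comp[OF PQ(1) pf_gmap])
  have pG: "polyfun (\<lambda>y. Q y * Q (?T y) * DD y)"
    by (intro polyfun.pf_mult PQ pQT pf_DD)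
  have pF: "polyfun (\<lambda>y. P y * Q (?T y) - P (?T y) * Q y)"
    by (intro polyfun_diff polyfun.pf_mult PQ pQT pPT)
  have "\<exists>y. Q y * Q (?T y) \<noteq> 0"
    by (rule polyfun_domain'[OF PQ(2) pQT Qa, of "?T' a"]) (simp add: inv1 Qa)
  then obtain y1 where "Q y1 * Q (?T y1) \<noteq> 0" by blast
  then have "\<exists>y. Q y * Q (?T y) * DD y \<noteq> 0"
    using polyfun_domain'[OF polyfun.pf_mult[OF PQ(2) pQT] pf_DD, of y1 stdall] DD_std by blast
  then obtain y2 where y2: "Q y2 * Q (?T y2) * DD y2 \<noteq> 0" by blast
  have zero: "(Q y * Q (?T y) * DD y) * (P y * Q (?T y) - P (?T y) * Q y) = 0" for y
  proof (cases "Q y * Q (?T y) * DD y = 0")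
    case False
    then have "Q y \<noteq> 0" "Q (?T y) \<noteq> 0" "\<forall>i. Delta (y$i) \<noteq> 0" by (auto simp: DD_nz)
    then have "P y / Q y = P (?T y) / Q (?T y)" by (intro hyp_gen[OF inv cond]) auto
    then have "P y * Q (?T y) - P (?T y) * Q y = 0"
      using \<open>Q y \<noteq> 0\<close> \<open>Q (?T y) \<noteq> 0\<close> by (simp add: field_simps)
    then show ?thesis by simp
  qed simp
  have "P y * Q (?T y) - P (?T y) * Q y = 0" for y
    by (rule polyfun_domain[OF pG pF zero y2])
  then show ?thesis using pf s by (simp add: good_def)
qed

lemma gstep_good:
  fixes P Q :: "complex^6^'d::finite \<Rightarrow> complex"
  assumes PQ: "polyfun P" "polyfun Q" and Qa: "Q a \<noteq> 0" and inv: "INV P Q"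
  shows "gstep\<^sup>*\<^sup>* y z \<Longrightarrow> \<exists>T. good P Q T \<and> T y = z"
proof (induction rule: rtranclp_induct)
  case base show ?case using good_id[of P Q] by (intro exI[of _ "\<lambda>x. x"]) simp
next
  case (step z w)
  then obtain T where T: "good P Q T" "T y = z" by blast
  from step(2) obtain i0 k j t where c: "k \<noteq> j \<or> t \<noteq> -1" and w: "w = gmap i0 (E k j t) z"
    unfolding gstep_def by blast
  have "good P Q (gmap i0 (E k j t) \<circ> T)"
    by (rule good_comp[OF PQ Qa T(1) good_gen[OF PQ Qa inv c]])
  then show ?case using T w by auto
qed

lemma block_norm:
  "bstep\<^sup>*\<^sup>* c c' \<Longrightarrow> z$i = c \<Longrightarrow> gstep\<^sup>*\<^sup>* z (\<chi> l. if l = i then c' else z$l)"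
proof (induction rule: rtranclp_induct)
  case base
  have "(\<chi> l. if l = i then c else z$l) = z" using base by (simp add: vec_eq_iff)
  then show ?case by simp
next
  case (step c1 c2)
  then have r: "gstep\<^sup>*\<^sup>* z (\<chi> l. if l = i then c1 else z$l)" by blast
  from step(2) obtain k j t where cnd: "k \<noteq> j \<or> t \<noteq> -1" and c2: "c2 = sub (E k j t) c1"
    unfolding bstep_def by blast
  have "(\<chi> l. if l = i then c2 else z$l) = gmap i (E k j t) (\<chi> l. if l = i then c1 else z$l)"
    by (simp add: gmap_def vec_eq_iff c2)
  then have "gstep (\<chi> l. if l = i then c1 else z$l) (\<chi> l. if l = i then c2 else z$l)"
    unfolding gstep_def using cnd by blast
  then show ?case using r by simp
qed

lemma all_norm:
  fixes y :: "complex^6^'d::finite"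
  assumes D: "\<forall>i. Delta (y$i) \<noteq> 0"
  shows "finite I \<Longrightarrow> gstep\<^sup>*\<^sup>* y (\<chi> l. if l \<in> I then std else y$l)"
proof (induction I rule: finite_induct)
  case empty
  have "(\<chi> l. if l \<in> {} then std else y$l) = y" by (simp add: vec_eq_iff)
  then show ?case by simp
next
  case (insert x F)
  let ?w = "(\<chi> l. if l \<in> F then std else y$l)"
  have wx: "?w$x = y$x" using insert by simp
  have "bstep\<^sup>*\<^sup>* (y$x) std" using D N1 by blast
  then have "gstep\<^sup>*\<^sup>* ?w (\<chi> l. if l = x then std else ?w$l)"
    by (rule block_norm[OF _ wx])
  moreover have "(\<chi> l. if l = x then std else ?w$l) = (\<chi> l. if l \<in> insert x F then std else y$l)"
    by (simp add: vec_eq_iff)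
  ultimately show ?case using rtranclp_trans[OF insert.IH] by simp
qed

lemma to_std: "\<forall>i. Delta ((y::complex^6^'d::finite)$i) \<noteq> 0 \<Longrightarrow> gstep\<^sup>*\<^sup>* y stdall"
proof -
  assume "\<forall>i. Delta (y$i) \<noteq> 0"
  then have "gstep\<^sup>*\<^sup>* y (\<chi> l. if l \<in> UNIV then std else y$l)" by (intro all_norm) auto
  moreover have "(\<chi> l. if l \<in> UNIV then std else y$l) = stdall" by (simp add: stdall_def)
  ultimately show ?thesis by simp
qed

lemma final:
  fixes P Q :: "complex^6^'d::finite \<Rightarrow> complex"
  assumes PQ: "polyfun P" "polyfun Q" and Qa: "Q a \<noteq> 0" and inv: "INV P Q"
  shows "P y * Q y0 = P y0 * Q y"
proof -
  have nd: "P y * Q y0 = P y0 * Q y" if "DD y \<noteq> 0" "DD y0 \<noteq> 0" for y y0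
  proof -
    have a1: "gstep\<^sup>*\<^sup>* y stdall" using that(1) to_std[of y] by (simp add: DD_nz)
    have a2: "gstep\<^sup>*\<^sup>* y0 stdall" using that(2) to_std[of y0] by (simp add: DD_nz)
    have "gstep\<^sup>*\<^sup>* y y0" by (rule rtranclp_trans[OF a1 gstep_rtr_sym[OF a2]])
    then obtain T where "good P Q T" "T y = y0" using gstep_good[OF PQ Qa inv] by blast
    then show ?thesis by (auto simp: good_def)
  qed
  have step1: "P y * Q y0 = P y0 * Q y" if "DD y0 \<noteq> 0" for y y0
  proof -
    have pF: "polyfun (\<lambda>y. P y * Q y0 - P y0 * Q y)"
      by (intro polyfun_diff polyfun.pf_mult PQ polyfun.pf_const)
    have "DD y * (P y * Q y0 - P y0 * Q y) = 0" for y
      using nd[of y y0] that by (cases "DD y = 0") auto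
    then have "P y * Q y0 - P y0 * Q y = 0"
      by (rule polyfun_domain[OF pf_DD pF _ DD_std])
    then show ?thesis by simp
  qed
  have pG: "polyfun (\<lambda>y0. P y * Q y0 - P y0 * Q y)"
    by (intro polyfun_diff polyfun.pf_mult PQ polyfun.pf_const)
  have "DD y0 * (P y * Q y0 - P y0 * Q y) = 0" for y0
    using step1[of y0 y] by (cases "DD y0 = 0") auto
  then have "P y * Q y0 - P y0 * Q y = 0"
    by (rule polyfun_domain[OF pf_DD pG _ DD_std])
  then show ?thesis by simp
qed

theorem mainTheorem3:
  fixes P Q :: "complex^6^'d::finite \<Rightarrow> complex"
  assumes rat: "rational_fun P Q"
    and inv: "\<And>(M :: 'd \<Rightarrow> complex^3^4) (A :: 'd \<Rightarrow> complex^3^3) C C' (c :: complex^6^'d) c'.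
       (\<forall>i. space_conic (M i) (A i)) \<Longrightarrow> camera C \<Longrightarrow> camera C' \<Longrightarrow>
       (\<forall>i. center_off_plane C (M i) \<and> center_off_plane C' (M i)) \<Longrightarrow>
       (\<forall>i. is_image_conic (c $ i) C (M i) (A i) \<and> is_image_conic (c' $ i) C' (M i) (A i)) \<Longrightarrow>
       Q c \<noteq> 0 \<Longrightarrow> Q c' \<noteq> 0 \<Longrightarrow> P c / Q c = P c' / Q c'"
  shows "\<exists>k. \<forall>y. Q y \<noteq> 0 \<longrightarrow> P y / Q y = k"
  proof -
  have PQ: "polyfun P" "polyfun Q" using rat by (auto simp: rational_fun_def)
  obtain a where Qa: "Q a \<noteq> 0" using rat by (auto simp: rational_fun_def)
  have I: "INV P Q" unfolding INV_def
    by (intro allI impI) (rule inv; assumption)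
  show ?thesis
  proof (intro exI[of _ "P a / Q a"] allI impI)
    fix y assume Qy: "Q y \<noteq> 0"
    have "P y * Q a = P a * Q y" by (rule final[OF PQ Qa I])
    then show "P y / Q y = P a / Q a" using Qy Qa by (simp add: field_simps)
  qed
qed

end
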